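(* Consider the system of ordinary differential equations, for $t\ge 0$, \begin{align*} \dot S &= \Lambda + \omega m Q - \big[\lambda(t)(1-p) + \phi p + \mu\big] S,\\ \dot A &= \lambda(t)(1-p) S - (q\upsilon+\mu) A,\\ \dot I &= q\upsilon A - (\delta_1+\mu) I,\\ \dot Q &= \phi p S + \delta_1 f_1 I + \delta_2(1-f_2-f_3) H - (\omega m+\mu) Q,\\ \dot H &= \delta_1(1-f_1) I + \eta(1-\kappa) H_{IC} - \big[\delta_2(1-f_2-f_3) + \delta_2 f_2 + \alpha_1 f_3 + \mu\big] H,\\ \dot H_{IC} &= \delta_2 f_2 H - \big[\eta(1-\kappa) + \alpha_2\kappa + \mu\big] H_{IC}, \end{align*} where $N(t)=S+A+I+Q+H+H_{IC}$ and $\lambda(t)=\beta\,[A(t)+I(t)+l_H H(t)]/N(t)$. Set $a_0=q\upsilon+\mu$, $a_1=\delta_1+\mu$, $a_2=m\omega+\mu$, $a_3=\delta_2(1-f_2-f_3)+\delta_2 f_2+\alpha_1 f_3+\mu$, $a_6=\delta_1(1-f_1)$, $\eta_\kappa=\eta(1-\kappa)$, $a_7=\alpha_2\kappa+\eta_\kappa+\mu$, $\chi=a_3a_7-\delta_2\eta_\kappa f_2$, and define $$R_0=\frac{\beta\, a_2\,(1-p)\Big[\big(l_H\, a_6\, q\upsilon+(a_1+q\upsilon)a_3\big)a_7-\delta_2\,\eta_\kappa\, f_2\,(q\upsilon+a_1)\Big]}{a_0\,a_1\,\chi\,(p\phi+a_2)}.$$ If $R_0>1$, then the system has a unique endemic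 equilibrium, i.e., a unique equilibrium $(S^*,A^*,I^*,Q^*,H^*,H_{IC}^* )$ whose force of infection $\lambda^*=\beta(A^*+I^*+l_H H^* )(1-p)/N^*$, with $N^*=S^*+A^*+I^*+Q^*+H^*+H_{IC}^*$, is strictly positive.
   Context: This is a compartmental COVID-19 model (susceptible $S$, asymptomatic infected $A$, symptomatic infected $I$, quarantined $Q$, hospitalized $H$, hospitalized in intensive care $H_{IC}$). All parameters are non-negative: $\Lambda>0$, $\mu>0$, $\beta>0$, $l_H>0$, $\phi,\upsilon,\delta_1,\delta_2,\eta,\omega,\alpha_1,\alpha_2>0$, and $p,q,f_1,f_2,f_3,\kappa,m\in[0,1]$ with $1-f_2-f_3\in[0,1]$. The relative transmissibility of class $A$ is taken equal to $1$. $R_0$ is called the basic reproduction number; an endemic equilibrium is an equilibrium of the system with strictly positive force of infection $\lambda^*$ (and $\chi>0$). *)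

theory Defs
  imports Complex_Main
begin

definition popN :: "real \<Rightarrow> real \<Rightarrow> real \<Rightarrow> real \<Rightarrow> real \<Rightarrow> real \<Rightarrow> real" where
  "popN S A I Q H HIC = S + A + I + Q + H + HIC"

definition covid_field ::
  "real \<Rightarrow> real \<Rightarrow> real \<Rightarrow> real \<Rightarrow> real \<Rightarrow> real \<Rightarrow> real \<Rightarrow> real \<Rightarrow> real \<Rightarrow> real \<Rightarrow>
   real \<Rightarrow> real \<Rightarrow> real \<Rightarrow> real \<Rightarrow> real \<Rightarrow> real \<Rightarrow> real \<Rightarrow> real \<Rightarrow> real \<Rightarrow>
   real \<times> real \<times> real \<times> real \<times> real \<times> real \<Rightarrow> real \<times> real \<times> real \<times> real \<times> real \<times> real" where
  "covid_field Lambda mu beta lH phi ups d1 d2 eta omega al1 al2 p q f1 f2 f3 kappa m x =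
    (case x of (S, A, I, Q, H, HIC) \<Rightarrow>
      (let lam = beta * (A + I + lH * H) / popN S A I Q H HIC in
       ( Lambda + omega * m * Q - (lam * (1 - p) + phi * p + mu) * S,
         lam * (1 - p) * S - (q * ups + mu) * A,
         q * ups * A - (d1 + mu) * I,
         phi * p * S + d1 * f1 * I + d2 * (1 - f2 - f3) * H - (omega * m + mu) * Q,
         d1 * (1 - f1) * I + eta * (1 - kappa) * HIC
           - (d2 * (1 - f2 - f3) + d2 * f2 + al1 * f3 + mu) * H,
         d2 * f2 * H - (eta * (1 - kappa) + al2 * kappa + mu) * HIC)))"

definition force_eq ::
  "real \<Rightarrow> real \<Rightarrow> real \<Rightarrow> real \<times> real \<times> real \<times> real \<times> real \<times> real \<Rightarrow> real" where
  "force_eq beta lH p x =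
    (case x of (S, A, I, Q, H, HIC) \<Rightarrow> beta * (A + I + lH * H) * (1 - p) / popN S A I Q H HIC)"

definition R0 ::
  "real \<Rightarrow> real \<Rightarrow> real \<Rightarrow> real \<Rightarrow> real \<Rightarrow> real \<Rightarrow> real \<Rightarrow> real \<Rightarrow> real \<Rightarrow> real \<Rightarrow>
   real \<Rightarrow> real \<Rightarrow> real \<Rightarrow> real \<Rightarrow> real \<Rightarrow> real \<Rightarrow> real \<Rightarrow> real \<Rightarrow> real \<Rightarrow> real" where
  "R0 Lambda mu beta lH phi ups d1 d2 eta omega al1 al2 p q f1 f2 f3 kappa m =
    (let a0 = q * ups + mu;
         a1 = d1 + mu;
         a2 = m * omega + mu;
         a3 = d2 * (1 - f2 - f3) + d2 * f2 + al1 * f3 + mu;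
         a6 = d1 * (1 - f1);
         etak = eta * (1 - kappa);
         a7 = al2 * kappa + etak + mu;
         chi = a3 * a7 - d2 * etak * f2
     in beta * a2 * (1 - p) * ((lH * a6 * q * ups + (a1 + q * ups) * a3) * a7
                              - d2 * etak * f2 * (q * ups + a1))
        / (a0 * a1 * chi * (p * phi + a2)))"

definition endemic_equilibrium ::
  "real \<Rightarrow> real \<Rightarrow> real \<Rightarrow> real \<Rightarrow> real \<Rightarrow> real \<Rightarrow> real \<Rightarrow> real \<Rightarrow> real \<Rightarrow> real \<Rightarrow>
   real \<Rightarrow> real \<Rightarrow> real \<Rightarrow> real \<Rightarrow> real \<Rightarrow> real \<Rightarrow> real \<Rightarrow> real \<Rightarrow> real \<Rightarrow>
   real \<times> real \<times> real \<times> real \<times> real \<times> real \<Rightarrow> bool" where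
  "endemic_equilibrium Lambda mu beta lH phi ups d1 d2 eta omega al1 al2 p q f1 f2 f3 kappa m x \<longleftrightarrow>
    (case x of (S, A, I, Q, H, HIC) \<Rightarrow> S \<ge> 0 \<and> A \<ge> 0 \<and> I \<ge> 0 \<and> Q \<ge> 0 \<and> H \<ge> 0 \<and> HIC \<ge> 0) \<and>
    covid_field Lambda mu beta lH phi ups d1 d2 eta omega al1 al2 p q f1 f2 f3 kappa m x
      = (0, 0, 0, 0, 0, 0) \<and>
    force_eq beta lH p x > 0"

end

theory Submission
  imports Defs
begin

lemma R0_aux:
  fixes a0 a1 chi a2 P :: real
  assumes "a0 > 0" "a1 > 0" "chi > 0" "P > 0"
  shows "beta * a2 * (1 - p) * (lH * a6 * q * ups * a7 + (a1 + q * ups) * chi) / (a0 * a1 * chi * P)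
    = beta * (1 - p) * (1 / a0 + q * ups / (a0 * a1) + lH * (a6 * a7 * (q * ups / (a0 * a1)) / chi)) * a2 / P"
  using assms by (simp add: field_simps)

theorem mainTheorem3:
  fixes Lambda mu beta lH phi ups d1 d2 eta omega al1 al2 p q f1 f2 f3 kappa m :: real
  assumes "Lambda > 0" "mu > 0" "beta > 0" "lH > 0"
    and "phi > 0" "ups > 0" "d1 > 0" "d2 > 0" "eta > 0" "omega > 0" "al1 > 0" "al2 > 0"
    and "0 \<le> p" "p \<le> 1" "0 \<le> q" "q \<le> 1" "0 \<le> f1" "f1 \<le> 1" "0 \<le> f2" "f2 \<le> 1"
    and "0 \<le> f3" "f3 \<le> 1" "0 \<le> kappa" "kappa \<le> 1" "0 \<le> m" "m \<le> 1"
    and "0 \<le> 1 - f2 - f3" "1 - f2 - f3 \<le> 1"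
    and "R0 Lambda mu beta lH phi ups d1 d2 eta omega al1 al2 p q f1 f2 f3 kappa m > 1"
  shows "\<exists>!x. endemic_equilibrium Lambda mu beta lH phi ups d1 d2 eta omega al1 al2 p q f1 f2 f3 kappa m x"
proof -
  note A = assms
  define a0 where "a0 = q * ups + mu"
  define a1 where "a1 = d1 + mu"
  define a2 where "a2 = omega * m + mu"
  define a3 where "a3 = d2 * (1 - f2 - f3) + d2 * f2 + al1 * f3 + mu"
  define a6 where "a6 = d1 * (1 - f1)"
  define ek where "ek = eta * (1 - kappa)"
  define a7 where "a7 = al2 * kappa + ek + mu"
  define chi where "chi = a3 * a7 - d2 * ek * f2"
  have a0p: "a0 > 0" using A by (simp add: a0_def add_nonneg_pos)
  have a1p: "a1 > 0" using A by (simp add: a1_def)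
  have a2p: "a2 > 0" using A by (simp add: a2_def add_nonneg_pos)
  have ekn: "ek \<ge> 0" using A by (simp add: ek_def)
  have a6n: "a6 \<ge> 0" using A by (simp add: a6_def)
  have a7p: "a7 > 0" using A ekn by (simp add: a7_def add_nonneg_pos)
  have a3p: "a3 > 0" using A unfolding a3_def
    by (intro add_nonneg_pos) (auto intro!: add_nonneg_nonneg)
  have d2f2: "d2 * f2 \<ge> 0" using A by simp
  have a3ge: "a3 \<ge> d2 * f2 + mu" using A unfolding a3_def by (simp add: add_nonneg_nonneg)
  have a7ge: "a7 \<ge> ek + mu" using A unfolding a7_def by simp
  have chip: "chi > 0"
  proof -
    have "a3 * a7 \<ge> (d2 * f2 + mu) * (ek + mu)"
      using a3ge a7ge d2f2 ekn A a3p by (intro mult_mono) auto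
    moreover have "(d2 * f2 + mu) * (ek + mu) > d2 * ek * f2"
    proof -
      have "ek * mu \<ge> 0" "d2 * (f2 * mu) \<ge> 0" "mu * mu > 0" using d2f2 ekn A by auto
      then show ?thesis by (simp add: algebra_simps)
    qed
    ultimately show ?thesis unfolding chi_def by simp
  qed
  have chige: "d2 * (1 - f2 - f3) * a7 \<le> chi"
  proof -
    have "chi - d2 * (1 - f2 - f3) * a7 = d2 * f2 * (a7 - ek) + (al1 * f3 + mu) * a7"
      unfolding chi_def a3_def by (simp add: algebra_simps)
    moreover have "a7 - ek \<ge> 0" using a7ge A by simp
    ultimately show ?thesis using d2f2 A a7p by (smt (verit) mult_nonneg_nonneg)
  qed
  define kI where "kI = q * ups / (a0 * a1)"
  define kH where "kH = a6 * a7 * kI / chi"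
  define kC where "kC = d2 * f2 * kH / a7"
  define cQ where "cQ = d1 * f1 * kI + d2 * (1 - f2 - f3) * kH"
  define B0 where "B0 = 1 / a0 + kI + lH * kH"
  define M where "M = 1 / a0 + kI + kH + kC + cQ / a2"
  have kIn: "kI \<ge> 0" using A a0p a1p by (simp add: kI_def)
  have kHn: "kH \<ge> 0" using a6n a7p kIn chip by (simp add: kH_def)
  have kCn: "kC \<ge> 0" using d2f2 kHn a7p by (simp add: kC_def)
  have cQn: "cQ \<ge> 0" using A kIn kHn unfolding cQ_def by (intro add_nonneg_nonneg) auto
  have Mp: "M > 0" using a0p kIn kHn kCn cQn a2p unfolding M_def
    by (intro add_pos_nonneg) auto
  have kIle: "kI \<le> 1 / a1"
  proof -
    have "q * ups \<le> a0" using A by (simp add: a0_def)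
    then have "q * ups / a0 \<le> 1" using a0p by simp
    then show ?thesis unfolding kI_def using a1p
      by (simp add: divide_simps)
  qed
  have cQle: "cQ \<le> 1"
  proof -
    have "d2 * (1 - f2 - f3) * kH \<le> a6 * kI"
    proof -
      have "d2 * (1 - f2 - f3) * kH = (d2 * (1 - f2 - f3) * a7 / chi) * (a6 * kI)"
        unfolding kH_def by simp
      moreover have "d2 * (1 - f2 - f3) * a7 / chi \<le> 1" using chige chip by simp
      ultimately show ?thesis using a6n kIn
        by (metis mult_right_mono mult_1 mult_nonneg_nonneg)
    qed
    then have "cQ \<le> d1 * f1 * kI + a6 * kI" unfolding cQ_def by simp
    also have "\<dots> = d1 * kI" unfolding a6_def by (simp add: algebra_simps)
    also have "\<dots> \<le> d1 / a1" using kIle A by (simp add: divide_simps) (smt (verit) a1p kIle mult_left_mono divide_pos_pos)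
    also have "\<dots> \<le> 1" using a1p by (simp add: a1_def A less_imp_le)
    finally show ?thesis .
  qed
  have R0eq: "R0 Lambda mu beta lH phi ups d1 d2 eta omega al1 al2 p q f1 f2 f3 kappa m
      = beta * (1 - p) * B0 * a2 / (a2 + p * phi)"
  proof -
    have "R0 Lambda mu beta lH phi ups d1 d2 eta omega al1 al2 p q f1 f2 f3 kappa m
      = beta * a2 * (1 - p) * ((lH * a6 * q * ups + (a1 + q * ups) * a3) * a7
                              - d2 * ek * f2 * (q * ups + a1))
        / (a0 * a1 * chi * (p * phi + a2))"
      unfolding R0_def Let_def a0_def a1_def a2_def a3_def a6_def ek_def a7_def chi_def
      by (simp add: mult.commute)
    also have "\<dots> = beta * (1 - p) * B0 * a2 / (a2 + p * phi)"
    proof -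
      have "a2 + p * phi > 0" using a2p A by (simp add: add_pos_nonneg)
      have eq: "(lH * a6 * q * ups + (a1 + q * ups) * a3) * a7
                              - d2 * ek * f2 * (q * ups + a1) = lH * a6 * q * ups * a7 + (a1 + q * ups) * chi"
        by (simp add: chi_def algebra_simps)
      have "beta * a2 * (1 - p) * ((lH * a6 * q * ups + (a1 + q * ups) * a3) * a7
                              - d2 * ek * f2 * (q * ups + a1))
        / (a0 * a1 * chi * (p * phi + a2)) = beta * a2 * (1 - p) * (lH * a6 * q * ups * a7 + (a1 + q * ups) * chi)
        / (a0 * a1 * chi * (p * phi + a2))" by (simp only: eq)
      also have "\<dots> = beta * (1 - p) * B0 * a2 / (a2 + p * phi)"
        unfolding B0_def kH_def kI_def using R0_aux[OF a0p a1p chip \<open>a2 + p * phi > 0\<close>]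
        by (simp add: add.commute[of "p * phi"])
      finally show ?thesis .
    qed
    finally show ?thesis .
  qed
  define K where "K = beta * (1 - p) * B0"
  define G where "G = (a2 + p * phi) / a2"
  have B0p: "B0 > 0" using a0p kIn kHn A unfolding B0_def by (intro add_pos_nonneg) auto
  have Gp: "G > 0" using a2p A unfolding G_def by (simp add: add_pos_nonneg)
  have R0K: "R0 Lambda mu beta lH phi ups d1 d2 eta omega al1 al2 p q f1 f2 f3 kappa m = K / G"
    unfolding R0eq K_def G_def by simp
  have KG: "K > G" using A(29) Gp unfolding R0K by (simp add: divide_simps)
  have p1: "p < 1"
  proof (rule ccontr)
    assume "\<not> p < 1" then have "p = 1" using A by simp
    then have "K = 0" unfolding K_def by simp
    then show False using KG Gp by simp
  qed
  define L0 where "L0 = (K - G) / M"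
  have L0p: "L0 > 0" using KG Mp unfolding L0_def by simp
  have L0M: "1 + phi * p / a2 + L0 * M = K"
    using Mp a2p unfolding L0_def G_def by (simp add: field_simps)
  define E where "E = 1 - omega * m * cQ / a2"
  have Ep: "E > 0"
  proof -
    have "omega * m \<ge> 0" using A by simp
    then have "omega * m * cQ \<le> omega * m" using cQle cQn by (simp add: mult_left_le)
    also have "\<dots> < a2" using A unfolding a2_def by simp
    finally show ?thesis unfolding E_def using a2p by simp
  qed
  define Dn where "Dn = (\<lambda>L. L * E + mu * (phi * p + a2) / a2)"
  have Dnp: "Dn L > 0" if "L \<ge> 0" for L
    using that Ep A a2p unfolding Dn_def
    by (intro add_nonneg_pos) (auto intro!: divide_pos_pos mult_pos_pos add_nonneg_pos)
  define S0 where "S0 = Lambda / Dn L0"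
  have S0p: "S0 > 0" using Dnp[of L0] L0p A unfolding S0_def by simp
  define x0 where "x0 = (S0, S0 * L0 / a0, S0 * L0 * kI, S0 * (phi * p + L0 * cQ) / a2, S0 * L0 * kH, S0 * L0 * kC)"
  have uniq: "x = x0" if ee: "endemic_equilibrium Lambda mu beta lH phi ups d1 d2 eta omega al1 al2 p q f1 f2 f3 kappa m x" for x
  proof -
    obtain S Aa I Q H C where xe: "x = (S, Aa, I, Q, H, C)" by (cases x) auto
    define N where "N = popN S Aa I Q H C"
    define L where "L = beta * (Aa + I + lH * H) * (1 - p) / N"
    have nn: "S \<ge> 0" "Aa \<ge> 0" "I \<ge> 0" "Q \<ge> 0" "H \<ge> 0" "C \<ge> 0"
      using ee unfolding xe endemic_equilibrium_def by auto
    have Lp: "L > 0" using ee unfolding xe endemic_equilibrium_def force_eq_def L_def N_def by simp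
    have lamL: "beta * (Aa + I + lH * H) / popN S Aa I Q H C * (1 - p) = L"
      unfolding L_def N_def by simp
    have fz: "covid_field Lambda mu beta lH phi ups d1 d2 eta omega al1 al2 p q f1 f2 f3 kappa m x = (0,0,0,0,0,0)"
      using ee unfolding endemic_equilibrium_def by simp
    have eqs: "Lambda + omega * m * Q - (L + phi * p + mu) * S = 0"
      "L * S - (q * ups + mu) * Aa = 0"
      "q * ups * Aa - (d1 + mu) * I = 0"
      "phi * p * S + d1 * f1 * I + d2 * (1 - f2 - f3) * H - (omega * m + mu) * Q = 0"
      "d1 * (1 - f1) * I + eta * (1 - kappa) * C - (d2 * (1 - f2 - f3) + d2 * f2 + al1 * f3 + mu) * H = 0"
      "d2 * f2 * H - (eta * (1 - kappa) + al2 * kappa + mu) * C = 0"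
      using fz unfolding xe covid_field_def Let_def by (simp_all only: prod.case lamL prod.inject)
    have e1: "Lambda + omega * m * Q = (L + phi * p + mu) * S" using eqs(1) by simp
    have e2: "L * S = a0 * Aa" using eqs(2) unfolding a0_def by simp
    have e3: "q * ups * Aa = a1 * I" using eqs(3) unfolding a1_def by simp
    have e4: "phi * p * S + d1 * f1 * I + d2 * (1 - f2 - f3) * H = a2 * Q" using eqs(4) unfolding a2_def by simp
    have e5: "a6 * I + ek * C = a3 * H" using eqs(5) unfolding a6_def ek_def a3_def by simp
    have e6: "d2 * f2 * H = a7 * C" using eqs(6) unfolding a7_def ek_def by simp
    have Sp: "S > 0"
    proof -
      have "Lambda + omega * m * Q > 0" using A nn by (simp add: add_pos_nonneg)
      then have "(L + phi * p + mu) * S > 0" using e1 by simp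
      moreover have "L + phi * p + mu > 0" using Lp A by (simp add: add_nonneg_pos add_pos_nonneg)
      ultimately show ?thesis by (simp add: zero_less_mult_iff)
    qed
    have Ae: "Aa = S * L / a0" using e2 a0p by (simp add: field_simps)
    have Ie: "I = S * L * kI" using e3 a1p a0p unfolding Ae kI_def by (simp add: field_simps)
    have Ce: "C = d2 * f2 * H / a7" using e6 a7p by (simp add: field_simps)
    have He: "H = S * L * kH"
    proof -
      have "a7 * a6 * I + ek * (a7 * C) = a7 * a3 * H" using e5 by (metis mult.assoc mult.left_commute distrib_left)
      then have "a7 * a6 * I + ek * d2 * f2 * H = a7 * a3 * H" unfolding e6[symmetric] by (simp add: algebra_simps)
      then have "chi * H = a6 * a7 * I" unfolding chi_def by (simp add: algebra_simps)
      then show ?thesis using chip unfolding Ie kH_def by (simp add: field_simps)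
    qed
    have Ce2: "C = S * L * kC" unfolding Ce He kC_def by simp
    have Qe: "Q = S * (phi * p + L * cQ) / a2" using e4 a2p unfolding Ie He cQ_def by (simp add: field_simps)
    have Ne: "N = S * (1 + phi * p / a2 + L * M)"
      unfolding N_def popN_def Ae Ie Qe He Ce2 M_def using a2p a0p by (simp add: field_simps)
    have Xe: "Aa + I + lH * H = S * L * B0"
      unfolding Ae Ie He B0_def using a0p by (simp add: field_simps)
    have Npos: "1 + phi * p / a2 + L * M > 0" using Lp Mp a2p A by (simp add: add_pos_nonneg)
    have "L = beta * (S * L * B0) * (1 - p) / (S * (1 + phi * p / a2 + L * M))"
      using L_def unfolding Xe Ne by simp
    then have "1 + phi * p / a2 + L * M = K"
    proof -
      assume h: "L = beta * (S * L * B0) * (1 - p) / (S * (1 + phi * p / a2 + L * M))"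
      define Dd where "Dd = 1 + phi * p / a2 + L * M"
      have Ddp: "Dd > 0" using Npos Dd_def by simp
      have n1: "beta * (S * L * B0) * (1 - p) = S * (L * K)" unfolding K_def by (simp add: algebra_simps)
      have "L = S * (L * K) / (S * Dd)" using h unfolding Dd_def[symmetric] n1 .
      then have "L = L * K / Dd" using Sp by simp
      then have "L * Dd = L * K" using Ddp by (simp add: field_simps)
      then show ?thesis using Lp unfolding Dd_def by simp
    qed
    then have LL: "L = L0" unfolding L0_def G_def using Mp a2p by (simp add: field_simps)
    have "S * Dn L = Lambda"
    proof -
      have om: "omega * m = a2 - mu" unfolding a2_def by simp
      have "Lambda + omega * m * Q - (L + phi * p + mu) * S = Lambda - S * Dn L"
        unfolding Qe Dn_def E_def om using a2p by (simp add: field_simps)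
      then show ?thesis using e1 by simp
    qed
    then have SS: "S = S0" unfolding S0_def LL using Dnp[of L0] L0p by (simp add: field_simps)
    show ?thesis unfolding xe x0_def using Ae Ie Qe He Ce2 SS LL by simp
  qed
  have ex: "endemic_equilibrium Lambda mu beta lH phi ups d1 d2 eta omega al1 al2 p q f1 f2 f3 kappa m x0"
  proof -
    define A0 where "A0 = S0 * L0 / a0"
    define I0 where "I0 = S0 * L0 * kI"
    define Q0 where "Q0 = S0 * (phi * p + L0 * cQ) / a2"
    define H0 where "H0 = S0 * L0 * kH"
    define C0 where "C0 = S0 * L0 * kC"
    have x0e: "x0 = (S0, A0, I0, Q0, H0, C0)" unfolding x0_def A0_def I0_def Q0_def H0_def C0_def by simp
    have nn: "S0 \<ge> 0 \<and> A0 \<ge> 0 \<and> I0 \<ge> 0 \<and> Q0 \<ge> 0 \<and> H0 \<ge> 0 \<and> C0 \<ge> 0"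
      using S0p L0p a0p kIn kHn kCn cQn a2p A
      unfolding A0_def I0_def Q0_def H0_def C0_def by (auto intro!: add_nonneg_nonneg)
    have N0: "popN S0 A0 I0 Q0 H0 C0 = S0 * (1 + phi * p / a2 + L0 * M)"
      unfolding popN_def A0_def I0_def Q0_def H0_def C0_def M_def using a2p a0p
      by (simp add: field_simps)
    have N0p: "popN S0 A0 I0 Q0 H0 C0 > 0" unfolding N0 L0M using KG Gp S0p by simp
    have X0: "A0 + I0 + lH * H0 = S0 * L0 * B0"
      unfolding A0_def I0_def H0_def B0_def using a0p by (simp add: field_simps)
    have lamx: "beta * (A0 + I0 + lH * H0) / popN S0 A0 I0 Q0 H0 C0 * (1 - p) = L0"
      unfolding X0 N0 L0M K_def using S0p B0p p1 A by (simp add: field_simps)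
    have fx: "beta * (A0 + I0 + lH * H0) * (1 - p) / popN S0 A0 I0 Q0 H0 C0 = L0"
      using lamx by simp
    have e1: "Lambda + omega * m * Q0 - (L0 + phi * p + mu) * S0 = 0"
    proof -
      have "S0 * Dn L0 = Lambda" unfolding S0_def using Dnp[of L0] L0p by simp
      moreover have "Lambda + omega * m * Q0 - (L0 + phi * p + mu) * S0 = Lambda - S0 * Dn L0"
      proof -
        have om: "omega * m = a2 - mu" unfolding a2_def by simp
        show ?thesis unfolding Q0_def Dn_def E_def om using a2p
          by (simp add: field_simps)
      qed
      ultimately show ?thesis by simp
    qed
    have e2: "L0 * S0 - (q * ups + mu) * A0 = 0"
    proof -
      have "L0 * S0 - a0 * A0 = 0" unfolding A0_def using a0p by simp
      then show ?thesis unfolding a0_def .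
    qed
    have e3: "q * ups * A0 - (d1 + mu) * I0 = 0"
    proof -
      have "q * ups * A0 - a1 * I0 = 0" unfolding A0_def I0_def kI_def using a0p a1p by simp
      then show ?thesis unfolding a1_def .
    qed
    have e4: "phi * p * S0 + d1 * f1 * I0 + d2 * (1 - f2 - f3) * H0 - (omega * m + mu) * Q0 = 0"
    proof -
      have "phi * p * S0 + d1 * f1 * I0 + d2 * (1 - f2 - f3) * H0 - a2 * Q0 = 0"
        unfolding Q0_def I0_def H0_def cQ_def using a2p by (simp add: field_simps)
      then show ?thesis unfolding a2_def .
    qed
    have e5: "d1 * (1 - f1) * I0 + eta * (1 - kappa) * C0
           - (d2 * (1 - f2 - f3) + d2 * f2 + al1 * f3 + mu) * H0 = 0"
    proof -
      have hc: "kH * chi = a6 * a7 * kI" unfolding kH_def using chip by simp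
      have "a6 * kI + ek * kC - a3 * kH = (kH * chi + ek * d2 * f2 * kH - a3 * a7 * kH) / a7"
        unfolding kC_def hc using a7p by (simp add: field_simps)
      also have "\<dots> = 0" unfolding chi_def by (simp add: algebra_simps)
      finally have "a6 * kI + ek * kC - a3 * kH = 0" .
      then have "S0 * L0 * (a6 * kI + ek * kC - a3 * kH) = 0" by simp
      then show ?thesis unfolding I0_def C0_def H0_def a6_def[symmetric] ek_def[symmetric] a3_def[symmetric]
        by (simp add: algebra_simps)
    qed
    have e6: "d2 * f2 * H0 - (eta * (1 - kappa) + al2 * kappa + mu) * C0 = 0"
    proof -
      have "d2 * f2 * H0 - a7 * C0 = 0" unfolding H0_def C0_def kC_def using a7p by simp
      moreover have "a7 = eta * (1 - kappa) + al2 * kappa + mu" unfolding a7_def ek_def by simp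
      ultimately show ?thesis by simp
    qed
    show ?thesis unfolding x0e endemic_equilibrium_def force_eq_def covid_field_def Let_def
      apply (simp only: prod.case lamx fx)
      using nn L0p e1 e2 e3 e4 e5 e6 by simp
  qed
  show ?thesis using ex uniq by blast
qed

end
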